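(* Let $\mathscr A$ and $\mathscr B$ be Hopf algebras over a field $\mathbb F$ (with comultiplications $\Delta_{\mathscr A},\Delta_{\mathscr B}$, counits $\varepsilon_{\mathscr A},\varepsilon_{\mathscr B}$ and antipodes $\sigma_{\mathscr A},\sigma_{\mathscr B}$, where $\sigma_{\mathscr B}$ is invertible), and let $\psi:\mathscr A\times\mathscr B\to\mathbb F$ be a skew-Hopf pairing. Let $\mathscr A*\mathscr B$ be the free product of the $\mathbb F$-algebras $\mathscr A$ and $\mathscr B$, and let $\mathcal I$ be the two-sided ideal of $\mathscr A*\mathscr B$ generated by the elements $$h_{a,b}:=\sum (b_2*a_2)\,\psi(a_1,b_1)-\sum (a_1*b_1)\,\psi(a_2,b_2)\qquad(a\in\mathscr A,\ b\in\mathscr B),$$ where $\Delta_{\mathscr A}(a)=\sum a_1\otimes a_2$ and $\Delta_{\mathscr B}(b)=\sum b_1\otimes b_2$. Suppose $X_{\mathscr A}\subseteq\mathscr A$ and $X_{\mathscr B}\subseteq\mathscr B$ are generating sets (as algebras) of $\mathscr A$ and $\mathscr B$ such that $\Delta_{\mathscr A}(X_{\mathscr A})\subseteq \mathrm{span}_{\mathbb F}X_{\mathscr A}\otimes\mathrm{span}_{\mathbb F}X_{\mathscr A}$ and $\Delta_{\mathscr B}(X_{\mathscr B})\subseteq \mathrm{span}_{\mathbb F}X_{\mathscr B}\otimes\mathrm{span}_{\mathbb F}X_{\mathscr B}$. Then $\mathcal I$ is generated by the elements $h_{a,b}$ with $a\in X_{\mathscr A}$ and $b\in X_{\mathscr 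B}$.
   Context: A skew-Hopf pairing of $\mathscr A$ and $\mathscr B$ is an $\mathbb F$-bilinear form $\psi:\mathscr A\times\mathscr B\to\mathbb F$ such that: (HP1) $\psi(1,b)=\varepsilon_{\mathscr B}(b)$ and $\psi(a,1)=\varepsilon_{\mathscr A}(a)$; (HP2) $\psi(a,bb')=\psi(\Delta_{\mathscr A}(a),b\otimes b')$; (HP3) $\psi(aa',b)=\psi(a\otimes a',\Delta^{\rm op}_{\mathscr B}(b))$, where $\Delta^{\rm op}_{\mathscr B}(b)=\sum b_2\otimes b_1$; (HP4) $\psi(\sigma_{\mathscr A}(a),b)=\psi(a,\sigma_{\mathscr B}^{-1}(b))$; here $\psi(a\otimes a',b\otimes b')=\psi(a,b)\psi(a',b')$. The free product $\mathscr A*\mathscr B$ is the $\mathbb F$-algebra with identity spanned by words alternating between nonidentity basis elements of $\mathscr A$ and of $\mathscr B$, with multiplication by contracted juxtaposition (it is the coproduct of $\mathscr A$ and $\mathscr B$ in the category of unital $\mathbb F$-algebras). *)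

theory Defs
  imports Complex_Main
begin

text \<open>Tensors are represented by finite lists of elementary tensors (Sweedler notation).
Two such representatives denote the same element of the tensor product over the field iff
every scalar-valued bilinear (resp. trilinear) form takes the same value on them
(the tensor product of vector spaces embeds into the dual of its dual).\<close>

definition bilinear_form :: "('k::field \<Rightarrow> 'a::ab_group_add \<Rightarrow> 'a) \<Rightarrow> ('a \<Rightarrow> 'a \<Rightarrow> 'k) \<Rightarrow> bool" where
  "bilinear_form sc \<beta> \<longleftrightarrow>
     (\<forall>c x y z. \<beta> (sc c x + y) z = c * \<beta> x z + \<beta> y z) \<and>
     (\<forall>c x y z. \<beta> x (sc c y + z) = c * \<beta> x y + \<beta> x z)"

definition trilinear_form :: "('k::field \<Rightarrow> 'a::ab_group_add \<Rightarrow> 'a) \<Rightarrow> ('a \<Rightarrow> 'a \<Rightarrow> 'a \<Rightarrow> 'k) \<Rightarrow> bool" where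
  "trilinear_form sc \<tau> \<longleftrightarrow>
     (\<forall>c x y z w. \<tau> (sc c x + y) z w = c * \<tau> x z w + \<tau> y z w) \<and>
     (\<forall>c x y z w. \<tau> w (sc c x + y) z = c * \<tau> w x z + \<tau> w y z) \<and>
     (\<forall>c x y z w. \<tau> w z (sc c x + y) = c * \<tau> w z x + \<tau> w z y)"

definition tensor_eq2 :: "('k::field \<Rightarrow> 'a::ab_group_add \<Rightarrow> 'a) \<Rightarrow> ('a \<times> 'a) list \<Rightarrow> ('a \<times> 'a) list \<Rightarrow> bool" where
  "tensor_eq2 sc t t' \<longleftrightarrow>
     (\<forall>\<beta>. bilinear_form sc \<beta> \<longrightarrow> (\<Sum>(x,y)\<leftarrow>t. \<beta> x y) = (\<Sum>(x,y)\<leftarrow>t'. \<beta> x y))"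

definition tensor_eq3 :: "('k::field \<Rightarrow> 'a::ab_group_add \<Rightarrow> 'a) \<Rightarrow> ('a \<times> 'a \<times> 'a) list \<Rightarrow> ('a \<times> 'a \<times> 'a) list \<Rightarrow> bool" where
  "tensor_eq3 sc t t' \<longleftrightarrow>
     (\<forall>\<tau>. trilinear_form sc \<tau> \<longrightarrow> (\<Sum>(x,y,z)\<leftarrow>t. \<tau> x y z) = (\<Sum>(x,y,z)\<leftarrow>t'. \<tau> x y z))"

definition hopf_algebra ::
  "('k::field \<Rightarrow> 'a::ring_1 \<Rightarrow> 'a) \<Rightarrow> ('a \<Rightarrow> ('a \<times> 'a) list) \<Rightarrow> ('a \<Rightarrow> 'k) \<Rightarrow> ('a \<Rightarrow> 'a) \<Rightarrow> bool" where
  "hopf_algebra sc \<Delta> \<epsilon> \<sigma> \<longleftrightarrow>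
     vector_space sc \<and>
     (\<forall>c x y. sc c (x * y) = sc c x * y \<and> sc c (x * y) = x * sc c y) \<and>
     \<comment> \<open>\<Delta> is a linear algebra homomorphism\<close>
     (\<forall>c x y. tensor_eq2 sc (\<Delta> (sc c x + y)) (map (\<lambda>(u,v). (sc c u, v)) (\<Delta> x) @ \<Delta> y)) \<and>
     (\<forall>x y. tensor_eq2 sc (\<Delta> (x * y)) [(x1 * y1, x2 * y2). (x1,x2) \<leftarrow> \<Delta> x, (y1,y2) \<leftarrow> \<Delta> y]) \<and>
     tensor_eq2 sc (\<Delta> 1) [(1,1)] \<and>
     \<comment> \<open>coassociativity\<close>
     (\<forall>x. tensor_eq3 sc [(y1,y2,x2). (x1,x2) \<leftarrow> \<Delta> x, (y1,y2) \<leftarrow> \<Delta> x1]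
                         [(x1,y1,y2). (x1,x2) \<leftarrow> \<Delta> x, (y1,y2) \<leftarrow> \<Delta> x2]) \<and>
     \<comment> \<open>counit: linear algebra homomorphism satisfying the counit laws\<close>
     (\<forall>c x y. \<epsilon> (sc c x + y) = c * \<epsilon> x + \<epsilon> y) \<and>
     (\<forall>x y. \<epsilon> (x * y) = \<epsilon> x * \<epsilon> y) \<and> \<epsilon> 1 = 1 \<and>
     (\<forall>x. (\<Sum>(x1,x2)\<leftarrow>\<Delta> x. sc (\<epsilon> x1) x2) = x \<and> (\<Sum>(x1,x2)\<leftarrow>\<Delta> x. sc (\<epsilon> x2) x1) = x) \<and>
     \<comment> \<open>antipode: linear, convolution inverse of the identity\<close>
     (\<forall>c x y. \<sigma> (sc c x + y) = sc c (\<sigma> x) + \<sigma> y) \<and>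
     (\<forall>x. (\<Sum>(x1,x2)\<leftarrow>\<Delta> x. \<sigma> x1 * x2) = sc (\<epsilon> x) 1 \<and> (\<Sum>(x1,x2)\<leftarrow>\<Delta> x. x1 * \<sigma> x2) = sc (\<epsilon> x) 1)"

definition skew_hopf_pairing ::
  "('k::field \<Rightarrow> 'a::ring_1 \<Rightarrow> 'a) \<Rightarrow> ('a \<Rightarrow> ('a \<times> 'a) list) \<Rightarrow> ('a \<Rightarrow> 'k) \<Rightarrow> ('a \<Rightarrow> 'a) \<Rightarrow>
   ('k \<Rightarrow> 'b::ring_1 \<Rightarrow> 'b) \<Rightarrow> ('b \<Rightarrow> ('b \<times> 'b) list) \<Rightarrow> ('b \<Rightarrow> 'k) \<Rightarrow> ('b \<Rightarrow> 'b) \<Rightarrow>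
   ('a \<Rightarrow> 'b \<Rightarrow> 'k) \<Rightarrow> bool" where
  "skew_hopf_pairing scA \<Delta>A \<epsilon>A \<sigma>A scB \<Delta>B \<epsilon>B \<sigma>B \<psi> \<longleftrightarrow>
     (\<forall>c a a' b. \<psi> (scA c a + a') b = c * \<psi> a b + \<psi> a' b) \<and>
     (\<forall>c a b b'. \<psi> a (scB c b + b') = c * \<psi> a b + \<psi> a b') \<and>
     (\<forall>b. \<psi> 1 b = \<epsilon>B b) \<and> (\<forall>a. \<psi> a 1 = \<epsilon>A a) \<and>
     (\<forall>a b b'. \<psi> a (b * b') = (\<Sum>(a1,a2)\<leftarrow>\<Delta>A a. \<psi> a1 b * \<psi> a2 b')) \<and>
     (\<forall>a a' b. \<psi> (a * a') b = (\<Sum>(b1,b2)\<leftarrow>\<Delta>B b. \<psi> a b2 * \<psi> a' b1)) \<and>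
     (\<forall>a b. \<psi> (\<sigma>A a) b = \<psi> a (inv \<sigma>B b))"

inductive_set alg_gen :: "('k::field \<Rightarrow> 'a::ring_1 \<Rightarrow> 'a) \<Rightarrow> 'a set \<Rightarrow> 'a set"
  for sc :: "'k::field \<Rightarrow> 'a::ring_1 \<Rightarrow> 'a" and X :: "'a set" where
  gen: "x \<in> X \<Longrightarrow> x \<in> alg_gen sc X"
| one: "1 \<in> alg_gen sc X"
| add: "x \<in> alg_gen sc X \<Longrightarrow> y \<in> alg_gen sc X \<Longrightarrow> x + y \<in> alg_gen sc X"
| scale: "x \<in> alg_gen sc X \<Longrightarrow> sc c x \<in> alg_gen sc X"
| mult: "x \<in> alg_gen sc X \<Longrightarrow> y \<in> alg_gen sc X \<Longrightarrow> x * y \<in> alg_gen sc X"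

text \<open>Free associative unital 'k-algebra on a set of letters 'x: elements are functions
from words to coefficients (the ideals below only contain finitely supported ones).\<close>

definition mono :: "'x list \<Rightarrow> 'x list \<Rightarrow> 'k::field" where
  "mono u w = (if w = u then 1 else 0)"

text \<open>word u * f * word v\<close>
definition wmul :: "'x list \<Rightarrow> ('x list \<Rightarrow> 'k::field) \<Rightarrow> 'x list \<Rightarrow> 'x list \<Rightarrow> 'k" where
  "wmul u f v w =
     (if length u + length v \<le> length w \<and> take (length u) w = u \<and> drop (length w - length v) w = v
      then f (drop (length u) (take (length w - length v) w)) else 0)"

inductive_set fa_ideal :: "('x list \<Rightarrow> 'k::field) set \<Rightarrow> ('x list \<Rightarrow> 'k) set"
  for S :: "('x list \<Rightarrow> 'k::field) set" where
  zero: "(\<lambda>_. 0) \<in> fa_ideal S"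
| gen: "s \<in> S \<Longrightarrow> wmul u s v \<in> fa_ideal S"
| add: "f \<in> fa_ideal S \<Longrightarrow> g \<in> fa_ideal S \<Longrightarrow> (\<lambda>w. f w + g w) \<in> fa_ideal S"
| smult: "f \<in> fa_ideal S \<Longrightarrow> (\<lambda>w. c * f w) \<in> fa_ideal S"

text \<open>Defining relations presenting the free product A * B as a quotient of the free
algebra on the letters 'a + 'b: the letters from A (resp. B) multiply as in A (resp. B),
the identities are identified with the empty word, and the letter maps are linear.\<close>

definition fp_rels :: "('k::field \<Rightarrow> 'a::ring_1 \<Rightarrow> 'a) \<Rightarrow> ('k \<Rightarrow> 'b::ring_1 \<Rightarrow> 'b)
    \<Rightarrow> (('a + 'b) list \<Rightarrow> 'k) set" where
  "fp_rels scA scB =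
     {(\<lambda>w. mono [Inl x, Inl y] w - mono [Inl (x * y)] w) | x y. True} \<union>
     {(\<lambda>w. mono [Inl 1] w - mono [] w)} \<union>
     {(\<lambda>w. mono [Inl (scA c x + y)] w - c * mono [Inl x] w - mono [Inl y] w) | c x y. True} \<union>
     {(\<lambda>w. mono [Inr x, Inr y] w - mono [Inr (x * y)] w) | x y. True} \<union>
     {(\<lambda>w. mono [Inr 1] w - mono [] w)} \<union>
     {(\<lambda>w. mono [Inr (scB c x + y)] w - c * mono [Inr x] w - mono [Inr y] w) | c x y. True}"

definition hgen :: "('a \<Rightarrow> ('a \<times> 'a) list) \<Rightarrow> ('b \<Rightarrow> ('b \<times> 'b) list) \<Rightarrow> ('a \<Rightarrow> 'b \<Rightarrow> 'k::field)
    \<Rightarrow> 'a \<Rightarrow> 'b \<Rightarrow> ('a + 'b) list \<Rightarrow> 'k" where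
  "hgen \<Delta>A \<Delta>B \<psi> a b w =
     (\<Sum>(a1,a2)\<leftarrow>\<Delta>A a. \<Sum>(b1,b2)\<leftarrow>\<Delta>B b. \<psi> a1 b1 * mono [Inr b2, Inl a2] w)
   - (\<Sum>(a1,a2)\<leftarrow>\<Delta>A a. \<Sum>(b1,b2)\<leftarrow>\<Delta>B b. \<psi> a2 b2 * mono [Inl a1, Inr b1] w)"

end

theory Submission
  imports Defs "HOL-Library.Function_Algebras"
begin


definition S :: "('a \<times> 'a) list \<Rightarrow> ('a \<Rightarrow> 'a \<Rightarrow> 'k::comm_ring_1) \<Rightarrow> 'k" where
  "S t f = sum_list (map (\<lambda>p. f (fst p) (snd p)) t)"
definition S3 :: "('a \<times> 'a \<times> 'a) list \<Rightarrow> ('a \<Rightarrow> 'a \<Rightarrow> 'a \<Rightarrow> 'k::comm_ring_1) \<Rightarrow> 'k" where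
  "S3 t f = sum_list (map (\<lambda>p. f (fst p) (fst (snd p)) (snd (snd p))) t)"

lemma S_conv: "sum_list (map (case_prod f) t) = S t f"
  unfolding S_def by (induction t) auto
lemma S3_conv: "sum_list (map (\<lambda>(x,y,z). f x y z) t) = S3 t f"
  unfolding S3_def by (induction t) auto

lemma S_Nil[simp]: "S [] f = 0" by (simp add: S_def)
lemma S_Cons[simp]: "S (p # t) f = f (fst p) (snd p) + S t f" by (simp add: S_def)
lemma S_append[simp]: "S (t @ t') f = S t f + S t' f" by (simp add: S_def)
lemma S_single: "S [(x,y)] f = f x y" by simp
lemma S_add: "S t (\<lambda>x y. f x y + g x y) = S t f + S t g"
  by (induction t) auto
lemma S_diff: "S t (\<lambda>x y. f x y - g x y) = S t f - S t g"
  by (induction t) auto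
lemma S_zero[simp]: "S t (\<lambda>x y. 0) = 0" by (induction t) auto
lemma S_cmult: "c * S t f = S t (\<lambda>x y. c * f x y)"
  by (induction t) (auto simp: algebra_simps)
lemma S_multc: "S t f * c = S t (\<lambda>x y. f x y * c)"
  by (induction t) (auto simp: algebra_simps)
lemma S_swap: "S t (\<lambda>x y. S t' (\<lambda>u v. f x y u v)) = S t' (\<lambda>u v. S t (\<lambda>x y. f x y u v))"
  by (induction t) (auto simp: S_add)
lemma S_cong: "(\<And>x y. (x,y) \<in> set t \<Longrightarrow> f x y = g x y) \<Longrightarrow> S t f = S t g"
  unfolding S_def by (induction t) auto

lemma S_map_pair[simp]: "S (map (\<lambda>(y1,y2). (g y1 y2, h y1 y2)) B) f = S B (\<lambda>y1 y2. f (g y1 y2) (h y1 y2))"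
  by (induction B) auto
lemma S3_map_triple[simp]: "S3 (map (\<lambda>(y1,y2). (g y1 y2, h y1 y2, k y1 y2)) B) f = S B (\<lambda>y1 y2. f (g y1 y2) (h y1 y2) (k y1 y2))"
  by (induction B) (auto simp: S3_def)
lemma S3_map_Pair[simp]: "S3 (map (Pair a) B) f = S B (f a)"
  by (induction B) (auto simp: S3_def)
lemma S3_append[simp]: "S3 (t @ t') f = S3 t f + S3 t' f" by (simp add: S3_def)
lemma S3_Nil[simp]: "S3 [] f = 0" by (simp add: S3_def)

lemma S_comp: "S [(x1 * y1, x2 * y2). (x1,x2) \<leftarrow> A, (y1,y2) \<leftarrow> B] f
   = S A (\<lambda>x1 x2. S B (\<lambda>y1 y2. f (x1*y1) (x2*y2)))"
  by (induction A) auto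

lemma S3_coassL: "S3 [(y1,y2,x2). (x1,x2) \<leftarrow> D, (y1,y2) \<leftarrow> \<Delta> x1] f
   = S D (\<lambda>x1 x2. S (\<Delta> x1) (\<lambda>y1 y2. f y1 y2 x2))"
  by (induction D) auto

lemma S3_coassR: "S3 [(x1,y1,y2). (x1,x2) \<leftarrow> D, (y1,y2) \<leftarrow> \<Delta> x2] f
   = S D (\<lambda>x1 x2. S (\<Delta> x2) (\<lambda>y1 y2. f x1 y1 y2))"
  by (induction D) auto

definition lin1 :: "('k::field \<Rightarrow> 'a::ab_group_add \<Rightarrow> 'a) \<Rightarrow> ('a \<Rightarrow> 'k) \<Rightarrow> bool" where
  "lin1 sc F \<longleftrightarrow> (\<forall>c x y. F (sc c x + y) = c * F x + F y)"

lemma bilin_iff: "bilinear_form sc \<beta> \<longleftrightarrow> (\<forall>z. lin1 sc (\<lambda>x. \<beta> x z)) \<and> (\<forall>z. lin1 sc (\<lambda>y. \<beta> z y))"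
  unfolding bilinear_form_def lin1_def by auto
lemma trilin_iff: "trilinear_form sc \<tau> \<longleftrightarrow> (\<forall>y z. lin1 sc (\<lambda>x. \<tau> x y z)) \<and> (\<forall>x z. lin1 sc (\<lambda>y. \<tau> x y z))
   \<and> (\<forall>x y. lin1 sc (\<lambda>z. \<tau> x y z))"
  unfolding trilinear_form_def lin1_def by auto

lemma lin1_add[intro]: "lin1 sc F \<Longrightarrow> lin1 sc G \<Longrightarrow> lin1 sc (\<lambda>x. F x + G x)"
  unfolding lin1_def by (auto simp: algebra_simps)
lemma lin1_diff[intro]: "lin1 sc F \<Longrightarrow> lin1 sc G \<Longrightarrow> lin1 sc (\<lambda>x. F x - G x)"
  unfolding lin1_def by (auto simp: algebra_simps)
lemma lin1_cmult[intro]: "lin1 sc F \<Longrightarrow> lin1 sc (\<lambda>x. c * F x)"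
  unfolding lin1_def by (auto simp: algebra_simps)
lemma lin1_multc[intro]: "lin1 sc F \<Longrightarrow> lin1 sc (\<lambda>x. F x * c)"
  unfolding lin1_def by (auto simp: algebra_simps)
lemma lin1_S[intro]: "(\<And>u v. (u,v) \<in> set t \<Longrightarrow> lin1 sc (\<lambda>x. f x u v)) \<Longrightarrow> lin1 sc (\<lambda>x. S t (f x))"
  unfolding lin1_def S_def by (induction t) (auto simp: algebra_simps)
lemma lin1_S'[intro]: "(\<And>u v. (u,v) \<in> set t \<Longrightarrow> lin1 sc (\<lambda>x. f u v x)) \<Longrightarrow> lin1 sc (\<lambda>x. S t (\<lambda>u v. f u v x))"
  unfolding lin1_def S_def by (induction t) (auto simp: algebra_simps)

lemma lin1_0: "vector_space sc \<Longrightarrow> lin1 sc F \<Longrightarrow> F 0 = 0"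
  unfolding lin1_def using vector_space.vector_space_assms(4)[of sc 0] by (metis add_cancel_left_left mult_1)
lemma lin1_scale: "vector_space sc \<Longrightarrow> lin1 sc F \<Longrightarrow> F (sc c x) = c * F x"
  using lin1_0[of sc F] unfolding lin1_def by (metis add.right_neutral)
lemma lin1_plus: "lin1 sc F \<Longrightarrow> vector_space sc \<Longrightarrow> F (x + y) = F x + F y"
  unfolding lin1_def using vector_space.vector_space_assms(4)[of sc x] by (metis mult_1)

lemma te2: "tensor_eq2 sc t t' \<Longrightarrow> bilinear_form sc \<beta> \<Longrightarrow> S t \<beta> = S t' \<beta>"
  unfolding tensor_eq2_def by (simp add: S_conv)
lemma te3: "tensor_eq3 sc t t' \<Longrightarrow> trilinear_form sc \<tau> \<Longrightarrow> S3 t \<tau> = S3 t' \<tau>"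
  unfolding tensor_eq3_def by (simp add: S3_conv)

lemma S_scaled: "vector_space sc \<Longrightarrow> (\<And>z. lin1 sc (\<lambda>x. \<beta> x z)) \<Longrightarrow>
   S (map (\<lambda>(u,v). (sc c u, v)) t) \<beta> = c * S t \<beta>"
proof (induction t)
  case (Cons p t)
  then show ?case using lin1_scale[of sc "\<lambda>x. \<beta> x (snd p)" c "fst p"]
    by (cases p) (auto simp: algebra_simps)
qed simp




lemma lin1_sumsc: "vector_space sc \<Longrightarrow> lin1 sc F \<Longrightarrow>
  F (sum_list (map (\<lambda>(x,y). sc (g x y) (h x y)) t)) = S t (\<lambda>x y. g x y * F (h x y))"
proof (induction t)
  case Nil then show ?case using lin1_0 by auto
next
  case (Cons p t)
  then show ?case by (cases p) (auto simp: lin1_plus lin1_scale)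
qed

locale core =
  fixes scA :: "'k::field \<Rightarrow> 'a::ring_1 \<Rightarrow> 'a"
    and scB :: "'k \<Rightarrow> 'b::ring_1 \<Rightarrow> 'b"
    and \<Delta>A :: "'a \<Rightarrow> ('a \<times> 'a) list" and \<epsilon>A :: "'a \<Rightarrow> 'k" and \<sigma>A :: "'a \<Rightarrow> 'a"
    and \<Delta>B :: "'b \<Rightarrow> ('b \<times> 'b) list" and \<epsilon>B :: "'b \<Rightarrow> 'k" and \<sigma>B :: "'b \<Rightarrow> 'b"
    and \<psi> :: "'a \<Rightarrow> 'b \<Rightarrow> 'k"
    and XA :: "'a set" and XB :: "'b set"
  assumes hA: "hopf_algebra scA \<Delta>A \<epsilon>A \<sigma>A"
    and hB: "hopf_algebra scB \<Delta>B \<epsilon>B \<sigma>B"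
    and pair: "skew_hopf_pairing scA \<Delta>A \<epsilon>A \<sigma>A scB \<Delta>B \<epsilon>B \<sigma>B \<psi>"
    and genA: "alg_gen scA XA = UNIV"
    and genB: "alg_gen scB XB = UNIV"
    and spA: "\<forall>x\<in>XA. \<exists>t. tensor_eq2 scA (\<Delta>A x) t \<and>
            (\<forall>(u,v)\<in>set t. u \<in> module.span scA XA \<and> v \<in> module.span scA XA)"
begin

lemma vsA: "vector_space scA" using hA by (simp add: hopf_algebra_def)
lemma vsB: "vector_space scB" using hB by (simp add: hopf_algebra_def)
lemma DA_lin: "tensor_eq2 scA (\<Delta>A (scA c x + y)) (map (\<lambda>(u,v). (scA c u, v)) (\<Delta>A x) @ \<Delta>A y)"
  using hA by (simp add: hopf_algebra_def)
lemma DB_lin: "tensor_eq2 scB (\<Delta>B (scB c x + y)) (map (\<lambda>(u,v). (scB c u, v)) (\<Delta>B x) @ \<Delta>B y)"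
  using hB by (simp add: hopf_algebra_def)
lemma DA_mul: "tensor_eq2 scA (\<Delta>A (x * y)) [(x1 * y1, x2 * y2). (x1,x2) \<leftarrow> \<Delta>A x, (y1,y2) \<leftarrow> \<Delta>A y]"
  using hA by (simp add: hopf_algebra_def)
lemma DB_mul: "tensor_eq2 scB (\<Delta>B (x * y)) [(x1 * y1, x2 * y2). (x1,x2) \<leftarrow> \<Delta>B x, (y1,y2) \<leftarrow> \<Delta>B y]"
  using hB by (simp add: hopf_algebra_def)
lemma DA_one: "tensor_eq2 scA (\<Delta>A 1) [(1,1)]"
  using hA by (simp add: hopf_algebra_def)
lemma DB_one: "tensor_eq2 scB (\<Delta>B 1) [(1,1)]"
  using hB by (simp add: hopf_algebra_def)
lemma DA_coass: "tensor_eq3 scA [(y1,y2,x2). (x1,x2) \<leftarrow> \<Delta>A x, (y1,y2) \<leftarrow> \<Delta>A x1]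
                         [(x1,y1,y2). (x1,x2) \<leftarrow> \<Delta>A x, (y1,y2) \<leftarrow> \<Delta>A x2]"
  using hA by (simp add: hopf_algebra_def)
lemma DB_coass: "tensor_eq3 scB [(y1,y2,x2). (x1,x2) \<leftarrow> \<Delta>B x, (y1,y2) \<leftarrow> \<Delta>B x1]
                         [(x1,y1,y2). (x1,x2) \<leftarrow> \<Delta>B x, (y1,y2) \<leftarrow> \<Delta>B x2]"
  using hB by (simp add: hopf_algebra_def)
lemma cuA: "sum_list (map (\<lambda>(x1,x2). scA (\<epsilon>A x1) x2) (\<Delta>A x)) = x"
    "sum_list (map (\<lambda>(x1,x2). scA (\<epsilon>A x2) x1) (\<Delta>A x)) = x"
  using hA by (simp_all add: hopf_algebra_def)
lemma cuB: "sum_list (map (\<lambda>(x1,x2). scB (\<epsilon>B x1) x2) (\<Delta>B x)) = x"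
    "sum_list (map (\<lambda>(x1,x2). scB (\<epsilon>B x2) x1) (\<Delta>B x)) = x"
  using hB by (simp_all add: hopf_algebra_def)

lemma psiA[intro]: "lin1 scA (\<lambda>a. \<psi> a b)"
  using pair unfolding skew_hopf_pairing_def lin1_def by auto
lemma psiB[intro]: "lin1 scB (\<lambda>b. \<psi> a b)"
  using pair unfolding skew_hopf_pairing_def lin1_def by auto
lemma psi1: "\<psi> 1 b = \<epsilon>B b" "\<psi> a 1 = \<epsilon>A a"
  using pair unfolding skew_hopf_pairing_def by auto
lemma HP2: "\<psi> a (b * b') = S (\<Delta>A a) (\<lambda>a1 a2. \<psi> a1 b * \<psi> a2 b')"
  using pair unfolding skew_hopf_pairing_def by (auto simp: S_conv)
lemma HP3: "\<psi> (a * a') b = S (\<Delta>B b) (\<lambda>b1 b2. \<psi> a b2 * \<psi> a' b1)"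
  using pair unfolding skew_hopf_pairing_def by (auto simp: S_conv)

definition Lh :: "(('a + 'b) list \<Rightarrow> 'k) \<Rightarrow> 'a \<Rightarrow> 'b \<Rightarrow> 'k" where
  "Lh M a b = S (\<Delta>A a) (\<lambda>a1 a2. S (\<Delta>B b) (\<lambda>b1 b2. \<psi> a1 b1 * M [Inr b2, Inl a2]))"
definition Rh :: "(('a + 'b) list \<Rightarrow> 'k) \<Rightarrow> 'a \<Rightarrow> 'b \<Rightarrow> 'k" where
  "Rh M a b = S (\<Delta>A a) (\<lambda>a1 a2. S (\<Delta>B b) (\<lambda>b1 b2. \<psi> a2 b2 * M [Inl a1, Inr b1]))"

definition good :: "(('a + 'b) list \<Rightarrow> 'k) \<Rightarrow> bool" where
  "good M \<longleftrightarrow>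
    (\<forall>u v x y. M (u @ Inl x # Inl y # v) = M (u @ Inl (x * y) # v)) \<and>
    (\<forall>u v. M (u @ Inl 1 # v) = M (u @ v)) \<and>
    (\<forall>u v c x y. M (u @ Inl (scA c x + y) # v) = c * M (u @ Inl x # v) + M (u @ Inl y # v)) \<and>
    (\<forall>u v x y. M (u @ Inr x # Inr y # v) = M (u @ Inr (x * y) # v)) \<and>
    (\<forall>u v. M (u @ Inr 1 # v) = M (u @ v)) \<and>
    (\<forall>u v c x y. M (u @ Inr (scB c x + y) # v) = c * M (u @ Inr x # v) + M (u @ Inr y # v)) \<and>
    (\<forall>u v a b. a \<in> XA \<longrightarrow> b \<in> XB \<longrightarrow> Lh (\<lambda>w. M (u @ w @ v)) a b = Rh (\<lambda>w. M (u @ w @ v)) a b)"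

lemma good_shift: assumes "good M" shows "good (\<lambda>w. M (u @ w @ v))"
  unfolding good_def
proof (intro conjI allI impI)
  note g = assms[unfolded good_def]
  fix ua va x y
  show "M (u @ (ua @ Inl x # Inl y # va) @ v) = M (u @ (ua @ Inl (x * y) # va) @ v)"
    using g[THEN conjunct1, rule_format, of "u@ua" x y "va@v"] by simp
next
  note g = assms[unfolded good_def]
  fix ua va x y
  show "M (u @ (ua @ Inr x # Inr y # va) @ v) = M (u @ (ua @ Inr (x * y) # va) @ v)"
    using g[THEN conjunct2, THEN conjunct2, THEN conjunct2, THEN conjunct1, rule_format, of "u@ua" x y "va@v"] by simp
next
  note g = assms[unfolded good_def]
  fix ua va
  show "M (u @ (ua @ Inl 1 # va) @ v) = M (u @ (ua @ va) @ v)"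
    using g[THEN conjunct2, THEN conjunct1, rule_format, of "u@ua" "va@v"] by simp
  show "M (u @ (ua @ Inr 1 # va) @ v) = M (u @ (ua @ va) @ v)"
    using g[THEN conjunct2, THEN conjunct2, THEN conjunct2, THEN conjunct2, THEN conjunct1, rule_format, of "u@ua" "va@v"] by simp
next
  note g = assms[unfolded good_def]
  fix ua va c x y
  show "M (u @ (ua @ Inl (scA c x + y) # va) @ v) = c * M (u @ (ua @ Inl x # va) @ v) + M (u @ (ua @ Inl y # va) @ v)"
    using g[THEN conjunct2, THEN conjunct2, THEN conjunct1, rule_format, of "u@ua" c x y "va@v"] by simp
next
  note g = assms[unfolded good_def]
  fix ua va c x y
  show "M (u @ (ua @ Inr (scB c x + y) # va) @ v) = c * M (u @ (ua @ Inr x # va) @ v) + M (u @ (ua @ Inr y # va) @ v)"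
    using g[THEN conjunct2, THEN conjunct2, THEN conjunct2, THEN conjunct2, THEN conjunct2, THEN conjunct1, rule_format, of "u@ua" c x y "va@v"] by simp
next
  note g = assms[unfolded good_def]
  fix ua va a b assume "a \<in> XA" "b \<in> XB"
  then show "Lh (\<lambda>w. M (u @ (ua @ w @ va) @ v)) a b = Rh (\<lambda>w. M (u @ (ua @ w @ va) @ v)) a b"
    using g[THEN conjunct2, THEN conjunct2, THEN conjunct2, THEN conjunct2, THEN conjunct2, THEN conjunct2, rule_format, of a b "u@ua" "va@v"] by simp
qed

lemma good_linA: "good M \<Longrightarrow> lin1 scA (\<lambda>x. M (u @ Inl x # v))"
  unfolding good_def lin1_def by blast
lemma good_linB: "good M \<Longrightarrow> lin1 scB (\<lambda>x. M (u @ Inr x # v))"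
  unfolding good_def lin1_def by blast
lemma good_linA0[intro]: "good M \<Longrightarrow> lin1 scA (\<lambda>x. M (Inl x # v))"
  using good_linA[of M "[]"] by simp
lemma good_linA1[intro]: "good M \<Longrightarrow> lin1 scA (\<lambda>x. M (p # Inl x # v))"
  using good_linA[of M "[p]"] by simp
lemma good_linA2[intro]: "good M \<Longrightarrow> lin1 scA (\<lambda>x. M (p # q # Inl x # v))"
  using good_linA[of M "[p,q]"] by simp
lemma good_linB0[intro]: "good M \<Longrightarrow> lin1 scB (\<lambda>x. M (Inr x # v))"
  using good_linB[of M "[]"] by simp
lemma good_linB1[intro]: "good M \<Longrightarrow> lin1 scB (\<lambda>x. M (p # Inr x # v))"
  using good_linB[of M "[p]"] by simp
lemma good_linB2[intro]: "good M \<Longrightarrow> lin1 scB (\<lambda>x. M (p # q # Inr x # v))"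
  using good_linB[of M "[p,q]"] by simp

lemma Lh_linA: assumes "good M" shows "lin1 scA (\<lambda>a. Lh M a b)"
  unfolding lin1_def
proof (intro allI)
  fix c x y
  let ?\<beta> = "\<lambda>a1 a2. S (\<Delta>B b) (\<lambda>b1 b2. \<psi> a1 b1 * M [Inr b2, Inl a2])"
  have bl: "bilinear_form scA ?\<beta>" unfolding bilin_iff using assms by (auto intro!: lin1_S lin1_S')
  show "Lh M (scA c x + y) b = c * Lh M x b + Lh M y b"
    unfolding Lh_def te2[OF DA_lin bl] S_append S_scaled[OF vsA bl[unfolded bilin_iff, THEN conjunct1, rule_format]] ..
qed

lemma teA_lin: "bilinear_form scA \<beta> \<Longrightarrow> S (\<Delta>A (scA c x + y)) \<beta> = c * S (\<Delta>A x) \<beta> + S (\<Delta>A y) \<beta>"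
  unfolding te2[OF DA_lin] S_append by (subst S_scaled[OF vsA]) (auto simp: bilin_iff)
lemma teB_lin: "bilinear_form scB \<beta> \<Longrightarrow> S (\<Delta>B (scB c x + y)) \<beta> = c * S (\<Delta>B x) \<beta> + S (\<Delta>B y) \<beta>"
  unfolding te2[OF DB_lin] S_append by (subst S_scaled[OF vsB]) (auto simp: bilin_iff)

lemma Rh_linA: assumes "good M" shows "lin1 scA (\<lambda>a. Rh M a b)"
  unfolding lin1_def Rh_def using assms by (intro allI teA_lin) (auto simp: bilin_iff intro!: lin1_S lin1_S')

lemma Lh_linB: assumes "good M" shows "lin1 scB (\<lambda>b. Lh M a b)"
  unfolding lin1_def Lh_def
proof (intro allI)
  fix c x y
  have "\<And>a1 a2. S (\<Delta>B (scB c x + y)) (\<lambda>b1 b2. \<psi> a1 b1 * M [Inr b2, Inl a2]) =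
     c * S (\<Delta>B x) (\<lambda>b1 b2. \<psi> a1 b1 * M [Inr b2, Inl a2]) + S (\<Delta>B y) (\<lambda>b1 b2. \<psi> a1 b1 * M [Inr b2, Inl a2])"
    using assms by (intro teB_lin) (auto simp: bilin_iff)
  then show "S (\<Delta>A a) (\<lambda>a1 a2. S (\<Delta>B (scB c x + y)) (\<lambda>b1 b2. \<psi> a1 b1 * M [Inr b2, Inl a2])) =
    c * S (\<Delta>A a) (\<lambda>a1 a2. S (\<Delta>B x) (\<lambda>b1 b2. \<psi> a1 b1 * M [Inr b2, Inl a2])) +
    S (\<Delta>A a) (\<lambda>a1 a2. S (\<Delta>B y) (\<lambda>b1 b2. \<psi> a1 b1 * M [Inr b2, Inl a2]))"
    by (simp add: S_add S_cmult)
qed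

lemma Rh_linB: assumes "good M" shows "lin1 scB (\<lambda>b. Rh M a b)"
  unfolding lin1_def Rh_def
proof (intro allI)
  fix c x y
  have "\<And>a1 a2. S (\<Delta>B (scB c x + y)) (\<lambda>b1 b2. \<psi> a2 b2 * M [Inl a1, Inr b1]) =
     c * S (\<Delta>B x) (\<lambda>b1 b2. \<psi> a2 b2 * M [Inl a1, Inr b1]) + S (\<Delta>B y) (\<lambda>b1 b2. \<psi> a2 b2 * M [Inl a1, Inr b1])"
    using assms by (intro teB_lin) (auto simp: bilin_iff)
  then show "S (\<Delta>A a) (\<lambda>a1 a2. S (\<Delta>B (scB c x + y)) (\<lambda>b1 b2. \<psi> a2 b2 * M [Inl a1, Inr b1])) =
    c * S (\<Delta>A a) (\<lambda>a1 a2. S (\<Delta>B x) (\<lambda>b1 b2. \<psi> a2 b2 * M [Inl a1, Inr b1])) +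
    S (\<Delta>A a) (\<lambda>a1 a2. S (\<Delta>B y) (\<lambda>b1 b2. \<psi> a2 b2 * M [Inl a1, Inr b1]))"
    by (simp add: S_add S_cmult)
qed

lemma good_rel:
  assumes "good M"
  shows "M (u @ Inl x # Inl y # v) = M (u @ Inl (x * y) # v)"
    "M (u @ Inl 1 # v) = M (u @ v)"
    "M (u @ Inr x' # Inr y' # v) = M (u @ Inr (x' * y') # v)"
    "M (u @ Inr 1 # v) = M (u @ v)"
  using assms unfolding good_def by simp_all

lemma LR_oneB: assumes g: "good M" shows "Lh M a 1 = Rh M a 1"
proof -
  have b1: "\<And>a1 a2. S (\<Delta>B 1) (\<lambda>b1 b2. \<psi> a1 b1 * M [Inr b2, Inl a2]) = \<epsilon>A a1 * M [Inl a2]"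
    using te2[OF DB_one] good_rel(4)[OF g, of "[]" "[Inl _]"] g
    by (subst te2[OF DB_one]) (auto simp: bilin_iff psi1)
  have b2: "\<And>a1 a2. S (\<Delta>B 1) (\<lambda>b1 b2. \<psi> a2 b2 * M [Inl a1, Inr b1]) = \<epsilon>A a2 * M [Inl a1]"
    using good_rel(4)[OF g, of "[Inl _]" "[]"] g
    by (subst te2[OF DB_one]) (auto simp: bilin_iff psi1)
  have "Lh M a 1 = M [Inl a]" unfolding Lh_def b1
    using lin1_sumsc[OF vsA good_linA0[OF g, of "[]"], of "\<lambda>x y. \<epsilon>A x" "\<lambda>x y. y" "\<Delta>A a"] cuA(1)[of a] by simp
  moreover have "Rh M a 1 = M [Inl a]" unfolding Rh_def b2
    using lin1_sumsc[OF vsA good_linA0[OF g, of "[]"], of "\<lambda>x y. \<epsilon>A y" "\<lambda>x y. x" "\<Delta>A a"] cuA(2)[of a] by simp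
  ultimately show ?thesis by simp
qed

lemma LR_oneA: assumes g: "good M" shows "Lh M 1 b = Rh M 1 b"
proof -
  have "Lh M 1 b = S (\<Delta>B b) (\<lambda>b1 b2. \<psi> 1 b1 * M [Inr b2, Inl 1])"
    unfolding Lh_def using g by (subst te2[OF DA_one]) (auto simp: bilin_iff intro!: lin1_S lin1_S')
  also have "\<dots> = S (\<Delta>B b) (\<lambda>b1 b2. \<epsilon>B b1 * M [Inr b2])"
    using good_rel(2)[OF g, of "[Inr _]" "[]"] by (simp add: psi1)
  also have "\<dots> = M [Inr b]"
    using lin1_sumsc[OF vsB good_linB0[OF g, of "[]"], of "\<lambda>x y. \<epsilon>B x" "\<lambda>x y. y" "\<Delta>B b"] cuB(1)[of b] by simp
  finally have 1: "Lh M 1 b = M [Inr b]" .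
  have "Rh M 1 b = S (\<Delta>B b) (\<lambda>b1 b2. \<psi> 1 b2 * M [Inl 1, Inr b1])"
    unfolding Rh_def using g by (subst te2[OF DA_one]) (auto simp: bilin_iff intro!: lin1_S lin1_S')
  also have "\<dots> = S (\<Delta>B b) (\<lambda>b1 b2. \<epsilon>B b2 * M [Inr b1])"
    using good_rel(2)[OF g, of "[]" "[Inr _]"] by (simp add: psi1)
  also have "\<dots> = M [Inr b]"
    using lin1_sumsc[OF vsB good_linB0[OF g, of "[]"], of "\<lambda>x y. \<epsilon>B y" "\<lambda>x y. x" "\<Delta>B b"] cuB(2)[of b] by simp
  finally show ?thesis using 1 by simp
qed

lemma coassA: "trilinear_form scA f \<Longrightarrow> S (\<Delta>A x) (\<lambda>x1 x2. S (\<Delta>A x1) (\<lambda>y1 y2. f y1 y2 x2))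
   = S (\<Delta>A x) (\<lambda>x1 x2. S (\<Delta>A x2) (\<lambda>y1 y2. f x1 y1 y2))"
  using te3[OF DA_coass, of f x] by (simp only: S3_coassL S3_coassR)
lemma coassB: "trilinear_form scB f \<Longrightarrow> S (\<Delta>B x) (\<lambda>x1 x2. S (\<Delta>B x1) (\<lambda>y1 y2. f y1 y2 x2))
   = S (\<Delta>B x) (\<lambda>x1 x2. S (\<Delta>B x2) (\<lambda>y1 y2. f x1 y1 y2))"
  using te3[OF DB_coass, of f x] by (simp only: S3_coassL S3_coassR)

lemma mulA: "bilinear_form scA \<beta> \<Longrightarrow> S (\<Delta>A (x * y)) \<beta> = S (\<Delta>A x) (\<lambda>x1 x2. S (\<Delta>A y) (\<lambda>y1 y2. \<beta> (x1*y1) (x2*y2)))"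
  using te2[OF DA_mul] by (simp add: S_comp)
lemma mulB: "bilinear_form scB \<beta> \<Longrightarrow> S (\<Delta>B (x * y)) \<beta> = S (\<Delta>B x) (\<lambda>x1 x2. S (\<Delta>B y) (\<lambda>y1 y2. \<beta> (x1*y1) (x2*y2)))"
  using te2[OF DB_mul] by (simp add: S_comp)

lemma LR_multA:
  assumes g: "good M"
    and Pa: "\<And>M' b. good M' \<Longrightarrow> Lh M' a b = Rh M' a b"
    and Pa': "\<And>M' b. good M' \<Longrightarrow> Lh M' a' b = Rh M' a' b"
  shows "Lh M (a * a') b = Rh M (a * a') b"
proof -
  have "Lh M (a * a') b = S (\<Delta>A a) (\<lambda>a1 a2. S (\<Delta>A a') (\<lambda>a1' a2'. S (\<Delta>B b) (\<lambda>b1 b2.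
           \<psi> (a1*a1') b1 * M [Inr b2, Inl (a2*a2')])))"
    unfolding Lh_def using g by (subst mulA) (auto simp: bilin_iff intro!: lin1_S lin1_S')
  also have "\<dots> = S (\<Delta>A a) (\<lambda>a1 a2. S (\<Delta>A a') (\<lambda>a1' a2'. S (\<Delta>B b) (\<lambda>b1 b2.
           S (\<Delta>B b1) (\<lambda>c1 c2. \<psi> a1 c2 * \<psi> a1' c1 * M [Inr b2, Inl a2, Inl a2']))))"
    using good_rel(1)[OF g, of "[Inr _]" _ _ "[]"] by (simp add: HP3 S_multc)
  also have "\<dots> = S (\<Delta>A a) (\<lambda>a1 a2. S (\<Delta>A a') (\<lambda>a1' a2'. S (\<Delta>B b) (\<lambda>b1 b2.
           S (\<Delta>B b2) (\<lambda>c1 c2. \<psi> a1 c1 * \<psi> a1' b1 * M [Inr c2, Inl a2, Inl a2']))))"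
  proof -
    have "\<And>a1 a2 a1' a2'. S (\<Delta>B b) (\<lambda>b1 b2. S (\<Delta>B b1) (\<lambda>c1 c2. \<psi> a1 c2 * \<psi> a1' c1 * M [Inr b2, Inl a2, Inl a2']))
       = S (\<Delta>B b) (\<lambda>b1 b2. S (\<Delta>B b2) (\<lambda>c1 c2. \<psi> a1 c1 * \<psi> a1' b1 * M [Inr c2, Inl a2, Inl a2']))"
      using g by (intro coassB) (auto simp: trilin_iff intro!: lin1_S lin1_S' lin1_cmult lin1_multc)
    then show ?thesis by simp
  qed
  also have "\<dots> = S (\<Delta>A a') (\<lambda>a1' a2'. S (\<Delta>B b) (\<lambda>b1 b2. \<psi> a1' b1 * Lh (\<lambda>w. M (w @ [Inl a2'])) a b2))"
    unfolding Lh_def by (simp add: S_cmult ac_simps S_swap[of "\<Delta>A a"])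
  also have "\<dots> = S (\<Delta>A a') (\<lambda>a1' a2'. S (\<Delta>B b) (\<lambda>b1 b2. \<psi> a1' b1 * Rh (\<lambda>w. M (w @ [Inl a2'])) a b2))"
    using Pa[OF good_shift[OF g, of "[]"]] by simp
  also have "\<dots> = S (\<Delta>A a') (\<lambda>a1' a2'. S (\<Delta>A a) (\<lambda>a1 a2. S (\<Delta>B b) (\<lambda>b1 b2.
           S (\<Delta>B b2) (\<lambda>c1 c2. \<psi> a1' b1 * \<psi> a2 c2 * M [Inl a1, Inr c1, Inl a2']))))"
    unfolding Rh_def by (simp add: S_cmult ac_simps S_swap[of "\<Delta>A a"])
  also have "\<dots> = S (\<Delta>A a') (\<lambda>a1' a2'. S (\<Delta>A a) (\<lambda>a1 a2. S (\<Delta>B b) (\<lambda>b1 b2.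
           S (\<Delta>B b1) (\<lambda>c1 c2. \<psi> a1' c1 * \<psi> a2 b2 * M [Inl a1, Inr c2, Inl a2']))))"
  proof -
    have "\<And>a1 a2 a1' a2'. S (\<Delta>B b) (\<lambda>b1 b2. S (\<Delta>B b1) (\<lambda>c1 c2. \<psi> a1' c1 * \<psi> a2 b2 * M [Inl a1, Inr c2, Inl a2']))
       = S (\<Delta>B b) (\<lambda>b1 b2. S (\<Delta>B b2) (\<lambda>c1 c2. \<psi> a1' b1 * \<psi> a2 c2 * M [Inl a1, Inr c1, Inl a2']))"
      using g by (intro coassB) (auto simp: trilin_iff intro!: lin1_S lin1_S' lin1_cmult lin1_multc)
    then show ?thesis by simp
  qed
  also have "\<dots> = S (\<Delta>A a) (\<lambda>a1 a2. S (\<Delta>B b) (\<lambda>b1 b2. \<psi> a2 b2 * Lh (\<lambda>w. M (Inl a1 # w)) a' b1))"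
    unfolding Lh_def by (simp add: S_cmult ac_simps S_swap[of "\<Delta>A a'"])
  also have "\<dots> = S (\<Delta>A a) (\<lambda>a1 a2. S (\<Delta>B b) (\<lambda>b1 b2. \<psi> a2 b2 * Rh (\<lambda>w. M (Inl a1 # w)) a' b1))"
    using Pa'[OF good_shift[OF g, of "[Inl _]" "[]", simplified]] by simp
  also have "\<dots> = S (\<Delta>A a) (\<lambda>a1 a2. S (\<Delta>A a') (\<lambda>a1' a2'. S (\<Delta>B b) (\<lambda>b1 b2.
           S (\<Delta>B b1) (\<lambda>c1 c2. \<psi> a2 b2 * \<psi> a2' c2 * M [Inl a1, Inl a1', Inr c1]))))"
    unfolding Rh_def by (simp add: S_cmult ac_simps S_swap[of "\<Delta>A a'"])
  also have "\<dots> = S (\<Delta>A a) (\<lambda>a1 a2. S (\<Delta>A a') (\<lambda>a1' a2'. S (\<Delta>B b) (\<lambda>b1 b2.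
           S (\<Delta>B b2) (\<lambda>c1 c2. \<psi> a2 c2 * \<psi> a2' c1 * M [Inl a1, Inl a1', Inr b1]))))"
  proof -
    have "\<And>a1 a2 a1' a2'. S (\<Delta>B b) (\<lambda>b1 b2. S (\<Delta>B b1) (\<lambda>c1 c2. \<psi> a2 b2 * \<psi> a2' c2 * M [Inl a1, Inl a1', Inr c1]))
       = S (\<Delta>B b) (\<lambda>b1 b2. S (\<Delta>B b2) (\<lambda>c1 c2. \<psi> a2 c2 * \<psi> a2' c1 * M [Inl a1, Inl a1', Inr b1]))"
      using g by (intro coassB) (auto simp: trilin_iff intro!: lin1_S lin1_S' lin1_cmult lin1_multc)
    then show ?thesis by simp
  qed
  also have "\<dots> = Rh M (a * a') b"
  proof -
    have "Rh M (a * a') b = S (\<Delta>A a) (\<lambda>a1 a2. S (\<Delta>A a') (\<lambda>a1' a2'. S (\<Delta>B b) (\<lambda>b1 b2.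
           \<psi> (a2*a2') b2 * M [Inl (a1*a1'), Inr b1])))"
      unfolding Rh_def using g by (subst mulA) (auto simp: bilin_iff intro!: lin1_S lin1_S')
    then show ?thesis using good_rel(1)[OF g, of "[]" _ _ "[Inr _]"] by (simp add: HP3 S_multc)
  qed
  finally show ?thesis .
qed

lemma te2_iff: "tensor_eq2 sc t t' \<longleftrightarrow> (\<forall>\<beta>. bilinear_form sc \<beta> \<longrightarrow> S t \<beta> = S t' \<beta>)"
  unfolding tensor_eq2_def by (simp add: S_conv)

lemma S_DA0: "bilinear_form scA \<beta> \<Longrightarrow> S (\<Delta>A 0) \<beta> = 0"
proof -
  assume b: "bilinear_form scA \<beta>"
  have "S (\<Delta>A 0) \<beta> = 1 * S (\<Delta>A 0) \<beta> + S (\<Delta>A 0) \<beta>"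
    using teA_lin[OF b, of 1 0 0] vector_space.vector_space_assms(4)[OF vsA, of 0] by simp
  then show ?thesis by (simp only: mult_1 add_cancel_right_right)
qed

definition spr :: "'a \<Rightarrow> bool" where
  "spr a \<longleftrightarrow> (\<exists>t. tensor_eq2 scA (\<Delta>A a) t \<and>
            (\<forall>(u,v)\<in>set t. u \<in> module.span scA XA \<and> v \<in> module.span scA XA))"

lemma spanrep: "a \<in> module.span scA XA \<Longrightarrow> \<exists>t. tensor_eq2 scA (\<Delta>A a) t \<and>
            (\<forall>(u,v)\<in>set t. u \<in> module.span scA XA \<and> v \<in> module.span scA XA)"
proof -
  interpret V: vector_space scA by (rule vsA)
  assume "a \<in> V.span XA"
  then have "spr a"
  proof (induction rule: V.span_induct)
    case (step x) then show ?case using spA unfolding spr_def by blast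
  next
    case base
    show ?case
    proof (rule V.subspaceI)
      show "0 \<in> Collect spr" unfolding spr_def
        by (simp, rule exI[of _ "[]"]) (simp add: te2_iff S_DA0)
    next
      fix x y assume "x \<in> Collect spr" "y \<in> Collect spr"
      then obtain tx ty where tx: "tensor_eq2 scA (\<Delta>A x) tx" "\<forall>(u,v)\<in>set tx. u \<in> V.span XA \<and> v \<in> V.span XA"
        and ty: "tensor_eq2 scA (\<Delta>A y) ty" "\<forall>(u,v)\<in>set ty. u \<in> V.span XA \<and> v \<in> V.span XA"
        unfolding spr_def by blast
      have "x + y = scA 1 x + y" by simp
      then have "tensor_eq2 scA (\<Delta>A (x + y)) (tx @ ty)"
        using tx(1) ty(1) teA_lin[of _ 1 x y] unfolding te2_iff by simp
      then show "x + y \<in> Collect spr" unfolding spr_def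
        using tx(2) ty(2) by simp (intro exI[of _ "tx@ty"], auto)
    next
      fix c x assume "x \<in> Collect spr"
      then obtain tx where tx: "tensor_eq2 scA (\<Delta>A x) tx" "\<forall>(u,v)\<in>set tx. u \<in> V.span XA \<and> v \<in> V.span XA"
        unfolding spr_def by blast
      have "tensor_eq2 scA (\<Delta>A (scA c x)) (map (\<lambda>(u,v). (scA c u, v)) tx)"
        unfolding te2_iff
      proof (intro allI impI)
        fix \<beta> :: "'a \<Rightarrow> 'a \<Rightarrow> 'k" assume b: "bilinear_form scA \<beta>"
        have "S (\<Delta>A (scA c x)) \<beta> = c * S (\<Delta>A x) \<beta>"
          using teA_lin[OF b, of c x 0] S_DA0[OF b] by simp
        also have "\<dots> = c * S tx \<beta>" using tx(1) b unfolding te2_iff by simp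
        also have "\<dots> = S (map (\<lambda>(u,v). (scA c u, v)) tx) \<beta>"
          using S_scaled[OF vsA, of \<beta> c tx] b unfolding bilin_iff by simp
        finally show "S (\<Delta>A (scA c x)) \<beta> = S (map (\<lambda>(u,v). (scA c u, v)) tx) \<beta>" .
      qed
      then show "scA c x \<in> Collect spr" unfolding spr_def
        using tx(2) by simp (intro exI[of _ "map (\<lambda>(u,v). (scA c u, v)) tx"], auto intro!: V.span_scale)
    qed
  qed
  then show ?thesis unfolding spr_def .
qed

lemma rep_subst:
  assumes a: "a \<in> module.span scA XA" and G: "bilinear_form scA G" and G': "bilinear_form scA G'"
    and eq: "\<And>a1 a2. a1 \<in> module.span scA XA \<Longrightarrow> a2 \<in> module.span scA XA \<Longrightarrow> G a1 a2 = G' a1 a2"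
  shows "S (\<Delta>A a) G = S (\<Delta>A a) G'"
proof -
  obtain t where t: "tensor_eq2 scA (\<Delta>A a) t" "\<forall>(u,v)\<in>set t. u \<in> module.span scA XA \<and> v \<in> module.span scA XA"
    using spanrep[OF a] by blast
  have "S (\<Delta>A a) G = S t G" using t(1) G unfolding te2_iff by simp
  also have "\<dots> = S t G'" using t(2) eq by (intro S_cong) auto
  also have "\<dots> = S (\<Delta>A a) G'" using t(1) G' unfolding te2_iff by simp
  finally show ?thesis .
qed

lemmas S_swapA = S_swap[where t'="\<Delta>A z" for z]

lemma LR_multB:
  assumes g: "good M" and a: "a \<in> module.span scA XA"
    and Pb: "\<And>M' a. good M' \<Longrightarrow> a \<in> module.span scA XA \<Longrightarrow> Lh M' a b = Rh M' a b"
    and Pb': "\<And>M' a. good M' \<Longrightarrow> a \<in> module.span scA XA \<Longrightarrow> Lh M' a b' = Rh M' a b'"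
  shows "Lh M a (b * b') = Rh M a (b * b')"
proof -
  have g1: "\<And>x. good (\<lambda>w. M (Inr x # w))" using good_shift[OF g, of "[Inr _]" "[]"] by simp
  have g2: "\<And>x. good (\<lambda>w. M (w @ [Inr x]))" using good_shift[OF g, of "[]" "[Inr _]"] by simp
  have "Lh M a (b * b') = S (\<Delta>A a) (\<lambda>a1 a2. S (\<Delta>B b) (\<lambda>b1 b2. S (\<Delta>B b') (\<lambda>b1' b2'.
          \<psi> a1 (b1*b1') * M [Inr (b2*b2'), Inl a2])))"
  proof -
    have "\<And>a1 a2. S (\<Delta>B (b * b')) (\<lambda>y1 y2. \<psi> a1 y1 * M [Inr y2, Inl a2]) =
       S (\<Delta>B b) (\<lambda>b1 b2. S (\<Delta>B b') (\<lambda>b1' b2'. \<psi> a1 (b1*b1') * M [Inr (b2*b2'), Inl a2]))"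
      using g by (subst mulB) (auto simp: bilin_iff)
    then show ?thesis unfolding Lh_def by simp
  qed
  also have "\<dots> = S (\<Delta>A a) (\<lambda>a1 a2. S (\<Delta>B b) (\<lambda>b1 b2. S (\<Delta>B b') (\<lambda>b1' b2'.
          S (\<Delta>A a1) (\<lambda>c1 c2. \<psi> c1 b1 * \<psi> c2 b1' * M [Inr b2, Inr b2', Inl a2]))))"
    using good_rel(3)[OF g, of "[]" _ _ "[Inl _]"] by (simp add: HP2 S_multc)
  also have "\<dots> = S (\<Delta>A a) (\<lambda>a1 a2. S (\<Delta>A a2) (\<lambda>c1 c2. S (\<Delta>B b) (\<lambda>b1 b2. S (\<Delta>B b') (\<lambda>b1' b2'.
          \<psi> a1 b1 * \<psi> c1 b1' * M [Inr b2, Inr b2', Inl c2]))))"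
  proof -
    have co: "S (\<Delta>A a) (\<lambda>a1 a2. S (\<Delta>A a1) (\<lambda>c1 c2. S (\<Delta>B b) (\<lambda>b1 b2. S (\<Delta>B b') (\<lambda>b1' b2'.
          \<psi> c1 b1 * \<psi> c2 b1' * M [Inr b2, Inr b2', Inl a2])))) =
       S (\<Delta>A a) (\<lambda>a1 a2. S (\<Delta>A a2) (\<lambda>c1 c2. S (\<Delta>B b) (\<lambda>b1 b2. S (\<Delta>B b') (\<lambda>b1' b2'.
          \<psi> a1 b1 * \<psi> c1 b1' * M [Inr b2, Inr b2', Inl c2]))))"
      using g by (intro coassA) (auto simp: trilin_iff intro!: lin1_S lin1_S' lin1_cmult lin1_multc)
    then show ?thesis by (simp add: S_swapA)
  qed
  also have "\<dots> = S (\<Delta>A a) (\<lambda>a1 a2. S (\<Delta>B b) (\<lambda>b1 b2. \<psi> a1 b1 * Lh (\<lambda>w. M (Inr b2 # w)) a2 b'))"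
    unfolding Lh_def by (simp add: S_cmult ac_simps S_swapA)
  also have "\<dots> = S (\<Delta>A a) (\<lambda>a1 a2. S (\<Delta>B b) (\<lambda>b1 b2. \<psi> a1 b1 * Rh (\<lambda>w. M (Inr b2 # w)) a2 b'))"
    using a g1 Pb' by (intro rep_subst)
      (auto simp: bilin_iff intro!: lin1_S lin1_S' lin1_cmult lin1_multc Lh_linA Rh_linA)
  also have "\<dots> = S (\<Delta>A a) (\<lambda>a1 a2. S (\<Delta>A a1) (\<lambda>c1 c2. S (\<Delta>B b) (\<lambda>b1 b2. S (\<Delta>B b') (\<lambda>b1' b2'.
          \<psi> c1 b1 * \<psi> a2 b2' * M [Inr b2, Inl c2, Inr b1']))))"
  proof -
    have co: "S (\<Delta>A a) (\<lambda>a1 a2. S (\<Delta>A a1) (\<lambda>c1 c2. S (\<Delta>B b) (\<lambda>b1 b2. S (\<Delta>B b') (\<lambda>b1' b2'.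
          \<psi> c1 b1 * \<psi> a2 b2' * M [Inr b2, Inl c2, Inr b1'])))) =
       S (\<Delta>A a) (\<lambda>a1 a2. S (\<Delta>A a2) (\<lambda>c1 c2. S (\<Delta>B b) (\<lambda>b1 b2. S (\<Delta>B b') (\<lambda>b1' b2'.
          \<psi> a1 b1 * \<psi> c2 b2' * M [Inr b2, Inl c1, Inr b1']))))"
      using g by (intro coassA) (auto simp: trilin_iff intro!: lin1_S lin1_S' lin1_cmult lin1_multc)
    then show ?thesis unfolding Rh_def by (simp add: S_cmult ac_simps S_swapA)
  qed
  also have "\<dots> = S (\<Delta>A a) (\<lambda>a1 a2. S (\<Delta>B b') (\<lambda>b1' b2'. \<psi> a2 b2' * Lh (\<lambda>w. M (w @ [Inr b1'])) a1 b))"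
    unfolding Lh_def by (simp add: S_cmult ac_simps S_swapA S_swap[of "\<Delta>B b'"])
  also have "\<dots> = S (\<Delta>A a) (\<lambda>a1 a2. S (\<Delta>B b') (\<lambda>b1' b2'. \<psi> a2 b2' * Rh (\<lambda>w. M (w @ [Inr b1'])) a1 b))"
    using a g2 Pb by (intro rep_subst)
      (auto simp: bilin_iff intro!: lin1_S lin1_S' lin1_cmult lin1_multc Lh_linA Rh_linA)
  also have "\<dots> = S (\<Delta>A a) (\<lambda>a1 a2. S (\<Delta>A a2) (\<lambda>c1 c2. S (\<Delta>B b) (\<lambda>b1 b2. S (\<Delta>B b') (\<lambda>b1' b2'.
          \<psi> c2 b2' * \<psi> c1 b2 * M [Inl a1, Inr b1, Inr b1']))))"
  proof -
    have co: "S (\<Delta>A a) (\<lambda>a1 a2. S (\<Delta>A a1) (\<lambda>c1 c2. S (\<Delta>B b) (\<lambda>b1 b2. S (\<Delta>B b') (\<lambda>b1' b2'.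
          \<psi> a2 b2' * \<psi> c2 b2 * M [Inl c1, Inr b1, Inr b1'])))) =
       S (\<Delta>A a) (\<lambda>a1 a2. S (\<Delta>A a2) (\<lambda>c1 c2. S (\<Delta>B b) (\<lambda>b1 b2. S (\<Delta>B b') (\<lambda>b1' b2'.
          \<psi> c2 b2' * \<psi> c1 b2 * M [Inl a1, Inr b1, Inr b1']))))"
      using g by (intro coassA) (auto simp: trilin_iff intro!: lin1_S lin1_S' lin1_cmult lin1_multc)
    then show ?thesis unfolding Rh_def by (simp add: S_cmult ac_simps S_swapA S_swap[of "\<Delta>B b'"])
  qed
  also have "\<dots> = Rh M a (b * b')"
  proof -
    have "\<And>a1 a2. S (\<Delta>B (b * b')) (\<lambda>y1 y2. \<psi> a2 y2 * M [Inl a1, Inr y1]) =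
       S (\<Delta>B b) (\<lambda>b1 b2. S (\<Delta>B b') (\<lambda>b1' b2'. \<psi> a2 (b2*b2') * M [Inl a1, Inr (b1*b1')]))"
      using g by (subst mulB) (auto simp: bilin_iff)
    then show ?thesis unfolding Rh_def
      using good_rel(3)[OF g, of "[Inl _]" _ _ "[]", symmetric]
      by (simp add: HP2 S_multc) (simp add: S_cmult S_swapA ac_simps)
  qed
  finally show ?thesis .
qed

lemma good_base: assumes "good M" "a \<in> XA" "b \<in> XB" shows "Lh M a b = Rh M a b"
proof -
  have "\<forall>u v a b. a \<in> XA \<longrightarrow> b \<in> XB \<longrightarrow> Lh (\<lambda>w. M (u @ w @ v)) a b = Rh (\<lambda>w. M (u @ w @ v)) a b"
    using assms(1) unfolding good_def by (elim conjE)
  then have "Lh (\<lambda>w. M ([] @ w @ [])) a b = Rh (\<lambda>w. M ([] @ w @ [])) a b" using assms(2,3) by blast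
  then show ?thesis by simp
qed

lemma stepA: "good M \<Longrightarrow> a \<in> module.span scA XA \<Longrightarrow> Lh M a b = Rh M a b"
proof -
  interpret V: vector_space scA by (rule vsA)
  have "b \<in> alg_gen scB XB" using genB by simp
  then have "\<forall>M a. good M \<longrightarrow> a \<in> V.span XA \<longrightarrow> Lh M a b = Rh M a b"
  proof (induction rule: alg_gen.induct)
    case (gen x)
    show ?case
    proof (intro allI impI)
      fix M a assume g: "good M" and a: "a \<in> V.span XA"
      have "a \<in> {a. Lh M a x = Rh M a x}"
        using a
      proof (rule V.span_subspace_induct)
        show "V.subspace {a. Lh M a x = Rh M a x}"
        proof (rule V.subspaceI)
          show "0 \<in> {a. Lh M a x = Rh M a x}"
            using lin1_0[OF vsA Lh_linA[OF g]] lin1_0[OF vsA Rh_linA[OF g]] by simp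
          show "\<And>y z. y \<in> {a. Lh M a x = Rh M a x} \<Longrightarrow> z \<in> {a. Lh M a x = Rh M a x} \<Longrightarrow> y + z \<in> {a. Lh M a x = Rh M a x}"
            using lin1_plus[OF Lh_linA[OF g] vsA] lin1_plus[OF Rh_linA[OF g] vsA] by simp
          show "\<And>c y. y \<in> {a. Lh M a x = Rh M a x} \<Longrightarrow> scA c y \<in> {a. Lh M a x = Rh M a x}"
            using lin1_scale[OF vsA Lh_linA[OF g]] lin1_scale[OF vsA Rh_linA[OF g]] by simp
        qed
        show "\<And>y. y \<in> XA \<Longrightarrow> y \<in> {a. Lh M a x = Rh M a x}"
          using good_base[OF g _ gen] by simp
      qed
      then show "Lh M a x = Rh M a x" by simp
    qed
  next
    case one then show ?case using LR_oneB by simp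
  next
    case (add x y) then show ?case
      using lin1_plus[OF Lh_linB vsB] lin1_plus[OF Rh_linB vsB] by simp
  next
    case (scale x c) then show ?case
      using lin1_scale[OF vsB Lh_linB] lin1_scale[OF vsB Rh_linB] by simp
  next
    case (mult x y)
    show ?case
    proof (intro allI impI)
      fix M a assume "good M" "a \<in> V.span XA"
      then show "Lh M a (x * y) = Rh M a (x * y)"
        by (rule LR_multB) (use mult.IH in auto)
    qed
  qed
  then show "good M \<Longrightarrow> a \<in> module.span scA XA \<Longrightarrow> Lh M a b = Rh M a b" by blast
qed

lemma stepB: "good M \<Longrightarrow> Lh M a b = Rh M a b"
proof -
  interpret V: vector_space scA by (rule vsA)
  have "a \<in> alg_gen scA XA" using genA by simp
  then have "\<forall>M b. good M \<longrightarrow> Lh M a b = Rh M a b"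
  proof (induction rule: alg_gen.induct)
    case (gen x) then show ?case using stepA V.span_base by simp
  next
    case one then show ?case using LR_oneA by simp
  next
    case (add x y) then show ?case
      using lin1_plus[OF Lh_linA vsA] lin1_plus[OF Rh_linA vsA] by simp
  next
    case (scale x c) then show ?case
      using lin1_scale[OF vsA Lh_linA] lin1_scale[OF vsA Rh_linA] by simp
  next
    case (mult x y)
    show ?case
    proof (intro allI impI)
      fix M b assume "good M"
      then show "Lh M (x * y) b = Rh M (x * y) b"
        by (rule LR_multA) (use mult.IH in auto)
    qed
  qed
  then show "good M \<Longrightarrow> Lh M a b = Rh M a b" by blast
qed

end


definition linF :: "(('x \<Rightarrow> 'k::field) \<Rightarrow> 'k) \<Rightarrow> bool" where
  "linF \<phi> \<longleftrightarrow> (\<forall>c g h. \<phi> (\<lambda>w. c * g w + h w) = c * \<phi> g + \<phi> h)"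

lemma vs_fun: "vector_space (\<lambda>c (g::'x \<Rightarrow> 'k::field). \<lambda>w. c * g w)"
  by unfold_locales (auto simp: fun_eq_iff algebra_simps)

lemma vs_field: "vector_space (times :: 'k::field \<Rightarrow> 'k \<Rightarrow> 'k)"
  by unfold_locales (auto simp: algebra_simps)

lemma separate:
  fixes I :: "('x \<Rightarrow> 'k::field) set"
  assumes z: "(\<lambda>_. 0) \<in> I" and ad: "\<And>f g. f\<in>I \<Longrightarrow> g\<in>I \<Longrightarrow> (\<lambda>w. f w + g w) \<in> I"
    and sm: "\<And>c f. f\<in>I \<Longrightarrow> (\<lambda>w. c * f w) \<in> I" and nf: "f \<notin> I"
  shows "\<exists>\<phi>. linF \<phi> \<and> (\<forall>g\<in>I. \<phi> g = 0) \<and> \<phi> f = 1"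
proof -
  interpret V: vector_space "\<lambda>c (g::'x \<Rightarrow> 'k). \<lambda>w. c * g w" by (rule vs_fun)
  interpret P: vector_space_pair "\<lambda>c (g::'x \<Rightarrow> 'k). \<lambda>w. c * g w" "times :: 'k \<Rightarrow> 'k \<Rightarrow> 'k"
    by (intro vector_space_pair.intro vs_fun vs_field)
  have sub: "V.subspace I" unfolding V.subspace_def
    using z ad sm by (auto simp: zero_fun_def plus_fun_def)
  obtain B where B: "B \<subseteq> I" "V.independent B" "I \<subseteq> V.span B"
    using V.maximal_independent_subset by blast
  have spB: "V.span B = I" using B sub V.span_minimal by blast
  have ind: "V.independent (insert f B)" using B(2) nf spB V.independent_insertI by blast
  obtain g where g: "Vector_Spaces.linear (\<lambda>c (g::'x \<Rightarrow> 'k). \<lambda>w. c * g w) times g"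
     "\<forall>x\<in>insert f B. g x = (\<lambda>x. if x = f then 1 else 0) x"
    using P.linear_independent_extend[OF ind, of "\<lambda>x. if x = f then 1 else 0"] by blast
  interpret G: Vector_Spaces.linear "\<lambda>c (g::'x \<Rightarrow> 'k). \<lambda>w. c * g w" "times :: 'k \<Rightarrow> 'k \<Rightarrow> 'k" g by (rule g(1))
  have "linF g" unfolding linF_def
  proof (intro allI)
    fix c :: 'k and h1 h2 :: "'x \<Rightarrow> 'k"
    have "(\<lambda>w. c * h1 w + h2 w) = (\<lambda>w. c * h1 w) + h2" by (simp add: plus_fun_def)
    then show "g (\<lambda>w. c * h1 w + h2 w) = c * g h1 + g h2" using G.add G.scale by simp
  qed
  moreover have "\<forall>h\<in>I. g h = 0"
  proof
    fix h assume "h \<in> I"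
    then have "h \<in> V.span B" using spB by simp
    moreover have "\<And>x. x \<in> B \<Longrightarrow> g x = 0" using g(2) B nf by auto
    ultimately show "g h = 0" using G.eq_0_on_span by blast
  qed
  ultimately show ?thesis using g(2) by auto
qed


lemma wmul_mono: "wmul u (mono w) v = mono (u @ w @ v)"
proof
  fix x
  show "wmul u (mono w) v x = mono (u @ w @ v) x"
  proof (cases "x = u @ w @ v")
    case True then show ?thesis by (simp add: wmul_def mono_def)
  next
    case False
    have "\<not> (length u + length v \<le> length x \<and> take (length u) x = u \<and> drop (length x - length v) x = v
           \<and> drop (length u) (take (length x - length v) x) = w)"
    proof
      assume h: "length u + length v \<le> length x \<and> take (length u) x = u \<and> drop (length x - length v) x = v
           \<and> drop (length u) (take (length x - length v) x) = w"
      have "x = take (length x - length v) x @ drop (length x - length v) x" by simp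
      also have "take (length x - length v) x = take (length u) (take (length x - length v) x) @ drop (length u) (take (length x - length v) x)"
        by (rule append_take_drop_id[symmetric])
      also have "take (length u) (take (length x - length v) x) = u"
      proof -
        have "length u \<le> length x - length v" using h by linarith
        then show ?thesis using h by (simp add: min_def)
      qed
      finally have "x = u @ w @ v" using h by simp
      with False show False by simp
    qed
    then show ?thesis using False by (auto simp: wmul_def mono_def)
  qed
qed

lemma wmul_map2: "H 0 0 = 0 \<Longrightarrow> wmul u (\<lambda>w. H (f w) (g w)) v = (\<lambda>w. H (wmul u f v w) (wmul u g v w))"
  by (auto simp: wmul_def fun_eq_iff)
lemma wmul_map3: "H 0 0 0 = 0 \<Longrightarrow> wmul u (\<lambda>w. H (f w) (g w) (h w)) v = (\<lambda>w. H (wmul u f v w) (wmul u g v w) (wmul u h v w))"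
  by (auto simp: wmul_def fun_eq_iff)
lemma wmul_cmult: "wmul u (\<lambda>w. c * f w) v = (\<lambda>w. c * wmul u f v w)"
  by (auto simp: wmul_def fun_eq_iff)
lemma wmul_S: "wmul u (\<lambda>w. S t (\<lambda>x y. G x y w)) v = (\<lambda>w. S t (\<lambda>x y. wmul u (G x y) v w))"
  by (induction t) (auto simp: wmul_def fun_eq_iff)
lemma wmul_diff: "wmul u (\<lambda>w. f w - g w) v = (\<lambda>w. wmul u f v w - wmul u g v w)"
  by (auto simp: wmul_def fun_eq_iff)

lemma linF_0: assumes l: "linF \<phi>" shows "\<phi> (\<lambda>w. 0) = 0"
proof -
  have "\<phi> (\<lambda>w. 1 * 0 + 0) = 1 * \<phi> (\<lambda>w. 0) + \<phi> (\<lambda>w. 0)"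
    using l[unfolded linF_def, rule_format, of 1 "\<lambda>_. 0" "\<lambda>_. 0"] by simp
  then have "\<phi> (\<lambda>w. 0) = \<phi> (\<lambda>w. 0) + \<phi> (\<lambda>w. 0)" by simp
  then show ?thesis by (simp only: add_cancel_right_right)
qed
lemma linF_cmult: assumes l: "linF \<phi>" shows "\<phi> (\<lambda>w. c * g w) = c * \<phi> g"
proof -
  have "\<phi> (\<lambda>w. c * g w + 0) = c * \<phi> g + \<phi> (\<lambda>w. 0)"
    using l[unfolded linF_def, rule_format, of c g "\<lambda>_. 0"] by simp
  then show ?thesis using linF_0[OF l] by simp
qed
lemma linF_add: assumes l: "linF \<phi>" shows "\<phi> (\<lambda>w. f w + g w) = \<phi> f + \<phi> g"
proof -
  have "\<phi> (\<lambda>w. 1 * f w + g w) = 1 * \<phi> f + \<phi> g"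
    using l unfolding linF_def by blast
  then show ?thesis by simp
qed
lemma linF_diff: "linF \<phi> \<Longrightarrow> \<phi> (\<lambda>w. f w - g w) = \<phi> f - \<phi> g"
proof -
  assume l: "linF \<phi>"
  have "(\<lambda>w. f w - g w) = (\<lambda>w. (-1) * g w + f w)" by auto
  then have "\<phi> (\<lambda>w. f w - g w) = \<phi> (\<lambda>w. (-1) * g w + f w)" by simp
  also have "\<dots> = (-1) * \<phi> g + \<phi> f" using l unfolding linF_def by blast
  finally show ?thesis by simp
qed
lemma linF_S: "linF \<phi> \<Longrightarrow> \<phi> (\<lambda>w. S t (\<lambda>x y. G x y w)) = S t (\<lambda>x y. \<phi> (G x y))"
proof (induction t)
  case Nil then show ?case by (simp add: linF_0)
next
  case (Cons p t)
  have e: "(\<lambda>w. S (p # t) (\<lambda>x y. G x y w)) = (\<lambda>w. G (fst p) (snd p) w + S t (\<lambda>x y. G x y w))" by simp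
  have "\<phi> (\<lambda>w. S (p # t) (\<lambda>x y. G x y w)) = \<phi> (G (fst p) (snd p)) + \<phi> (\<lambda>w. S t (\<lambda>x y. G x y w))"
    unfolding e by (rule linF_add[OF Cons.prems])
  also have "\<dots> = S (p # t) (\<lambda>x y. \<phi> (G x y))" using Cons.IH[OF Cons.prems] by simp
  finally show ?case .
qed

context core begin

definition Iset where "Iset = fa_ideal (fp_rels scA scB \<union> {hgen \<Delta>A \<Delta>B \<psi> a b | a b. a \<in> XA \<and> b \<in> XB})"

lemma hgen_eq: "hgen \<Delta>A \<Delta>B \<psi> a b = (\<lambda>w. S (\<Delta>A a) (\<lambda>a1 a2. S (\<Delta>B b) (\<lambda>b1 b2. \<psi> a1 b1 * mono [Inr b2, Inl a2] w))
   - S (\<Delta>A a) (\<lambda>a1 a2. S (\<Delta>B b) (\<lambda>b1 b2. \<psi> a2 b2 * mono [Inl a1, Inr b1] w)))"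
  by (simp add: hgen_def S_conv fun_eq_iff)

lemma phi_wmul_hgen: assumes l: "linF \<phi>" shows "\<phi> (wmul u (hgen \<Delta>A \<Delta>B \<psi> a b) v) =
   Lh (\<lambda>x. \<phi> (mono (u @ x @ v))) a b - Rh (\<lambda>x. \<phi> (mono (u @ x @ v))) a b"
  unfolding hgen_eq Lh_def Rh_def
  by (simp add: wmul_diff wmul_S wmul_cmult wmul_mono linF_diff[OF l] linF_S[OF l] linF_cmult[OF l])

lemma Iset_gen: "s \<in> fp_rels scA scB \<Longrightarrow> wmul u s v \<in> Iset"
  unfolding Iset_def by (rule fa_ideal.gen) simp

lemma good_phi:
  assumes l: "linF \<phi>" and z: "\<forall>g\<in>Iset. \<phi> g = 0"
  shows "good (\<lambda>x. \<phi> (mono x))"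
  unfolding good_def
proof (intro conjI allI impI)
  fix u v and x y :: 'a
  have "wmul u (\<lambda>w. mono [Inl x, Inl y] w - mono [Inl (x * y)] w) v \<in> Iset"
    by (rule Iset_gen) (unfold fp_rels_def, blast)
  then have "\<phi> (wmul u (\<lambda>w. mono [Inl x, Inl y] w - mono [Inl (x * y)] w) v) = 0" using z by blast
  then show "\<phi> (mono (u @ Inl x # Inl y # v)) = \<phi> (mono (u @ Inl (x * y) # v))"
    by (simp add: wmul_diff wmul_mono linF_diff[OF l])
next
  fix u v and x y :: 'b
  have "wmul u (\<lambda>w. mono [Inr x, Inr y] w - mono [Inr (x * y)] w) v \<in> Iset"
    by (rule Iset_gen) (unfold fp_rels_def, blast)
  then have "\<phi> (wmul u (\<lambda>w. mono [Inr x, Inr y] w - mono [Inr (x * y)] w) v) = 0" using z by blast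
  then show "\<phi> (mono (u @ Inr x # Inr y # v)) = \<phi> (mono (u @ Inr (x * y) # v))"
    by (simp add: wmul_diff wmul_mono linF_diff[OF l])
next
  fix u v
  have "wmul u (\<lambda>w. mono [Inl 1] w - mono [] w) v \<in> Iset"
    by (rule Iset_gen) (unfold fp_rels_def, blast)
  then have "\<phi> (wmul u (\<lambda>w. mono [Inl 1] w - mono [] w) v) = 0" using z by blast
  then show "\<phi> (mono (u @ Inl 1 # v)) = \<phi> (mono (u @ v))"
    by (simp add: wmul_diff wmul_mono linF_diff[OF l])
next
  fix u v
  have "wmul u (\<lambda>w. mono [Inr 1] w - mono [] w) v \<in> Iset"
    by (rule Iset_gen) (unfold fp_rels_def, blast)
  then have "\<phi> (wmul u (\<lambda>w. mono [Inr 1] w - mono [] w) v) = 0" using z by blast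
  then show "\<phi> (mono (u @ Inr 1 # v)) = \<phi> (mono (u @ v))"
    by (simp add: wmul_diff wmul_mono linF_diff[OF l])
next
  fix u v c and x y :: 'a
  have "wmul u (\<lambda>w. mono [Inl (scA c x + y)] w - c * mono [Inl x] w - mono [Inl y] w) v \<in> Iset"
    by (rule Iset_gen) (unfold fp_rels_def, blast)
  then have "\<phi> (wmul u (\<lambda>w. mono [Inl (scA c x + y)] w - c * mono [Inl x] w - mono [Inl y] w) v) = 0" using z by blast
  then show "\<phi> (mono (u @ Inl (scA c x + y) # v)) = c * \<phi> (mono (u @ Inl x # v)) + \<phi> (mono (u @ Inl y # v))"
    by (simp only: wmul_diff wmul_cmult wmul_mono linF_diff[OF l] linF_cmult[OF l]) (simp add: algebra_simps)
next
  fix u v c and x y :: 'b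
  have "wmul u (\<lambda>w. mono [Inr (scB c x + y)] w - c * mono [Inr x] w - mono [Inr y] w) v \<in> Iset"
    by (rule Iset_gen) (unfold fp_rels_def, blast)
  then have "\<phi> (wmul u (\<lambda>w. mono [Inr (scB c x + y)] w - c * mono [Inr x] w - mono [Inr y] w) v) = 0" using z by blast
  then show "\<phi> (mono (u @ Inr (scB c x + y) # v)) = c * \<phi> (mono (u @ Inr x # v)) + \<phi> (mono (u @ Inr y # v))"
    by (simp only: wmul_diff wmul_cmult wmul_mono linF_diff[OF l] linF_cmult[OF l]) (simp add: algebra_simps)
next
  fix u v a b assume ab: "a \<in> XA" "b \<in> XB"
  have "wmul u (hgen \<Delta>A \<Delta>B \<psi> a b) v \<in> Iset"
    unfolding Iset_def by (rule fa_ideal.gen) (use ab in blast)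
  then have "\<phi> (wmul u (hgen \<Delta>A \<Delta>B \<psi> a b) v) = 0" using z by blast
  then show "Lh (\<lambda>w. \<phi> (mono (u @ w @ v))) a b = Rh (\<lambda>w. \<phi> (mono (u @ w @ v))) a b"
    using phi_wmul_hgen[OF l] by simp
qed

lemma hgen_in: "wmul u (hgen \<Delta>A \<Delta>B \<psi> a b) v \<in> Iset"
proof (rule ccontr)
  assume n: "wmul u (hgen \<Delta>A \<Delta>B \<psi> a b) v \<notin> Iset"
  obtain \<phi> where l: "linF \<phi>" and z: "\<forall>g\<in>Iset. \<phi> g = 0" and one: "\<phi> (wmul u (hgen \<Delta>A \<Delta>B \<psi> a b) v) = 1"
  proof -
    have z0: "(\<lambda>_. 0) \<in> Iset" unfolding Iset_def by (rule fa_ideal.zero)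
    have a0: "\<And>f g. f \<in> Iset \<Longrightarrow> g \<in> Iset \<Longrightarrow> (\<lambda>w. f w + g w) \<in> Iset"
      unfolding Iset_def by (rule fa_ideal.add)
    have s0: "\<And>c f. f \<in> Iset \<Longrightarrow> (\<lambda>w. c * f w) \<in> Iset"
      unfolding Iset_def by (rule fa_ideal.smult)
    show ?thesis using separate[OF z0 a0 s0 n] that by blast
  qed
  have g: "good (\<lambda>w. \<phi> (mono (u @ w @ v)))" using good_shift[OF good_phi[OF l z]] .
  have "\<phi> (wmul u (hgen \<Delta>A \<Delta>B \<psi> a b) v) = 0"
    using phi_wmul_hgen[OF l] stepB[OF g] by simp
  with one show False by simp
qed

lemma main0: "fa_ideal (fp_rels scA scB \<union> {hgen \<Delta>A \<Delta>B \<psi> a b | a b. True}) = Iset"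
proof
  show "fa_ideal (fp_rels scA scB \<union> {hgen \<Delta>A \<Delta>B \<psi> a b | a b. True}) \<subseteq> Iset"
  proof
    fix f assume "f \<in> fa_ideal (fp_rels scA scB \<union> {hgen \<Delta>A \<Delta>B \<psi> a b | a b. True})"
    then show "f \<in> Iset"
    proof (induction rule: fa_ideal.induct)
      case zero then show ?case unfolding Iset_def by (rule fa_ideal.zero)
    next
      case (gen s u v)
      then show ?case
      proof
        assume "s \<in> fp_rels scA scB" then show ?thesis by (rule Iset_gen)
      next
        assume "s \<in> {hgen \<Delta>A \<Delta>B \<psi> a b | a b. True}"
        then obtain a b where "s = hgen \<Delta>A \<Delta>B \<psi> a b" by blast
        then show ?thesis using hgen_in by simp
      qed
    next
      case (add f g) then show ?case unfolding Iset_def using fa_ideal.add by blast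
    next
      case (smult f c) then show ?case unfolding Iset_def using fa_ideal.smult by blast
    qed
  qed
next
  show "Iset \<subseteq> fa_ideal (fp_rels scA scB \<union> {hgen \<Delta>A \<Delta>B \<psi> a b | a b. True})"
  proof
    fix f assume "f \<in> Iset"
    then show "f \<in> fa_ideal (fp_rels scA scB \<union> {hgen \<Delta>A \<Delta>B \<psi> a b | a b. True})"
      unfolding Iset_def
    proof (induction rule: fa_ideal.induct)
      case zero then show ?case by (rule fa_ideal.zero)
    next
      case (gen s u v) then show ?case by (intro fa_ideal.gen) blast
    next
      case (add f g) then show ?case using fa_ideal.add by blast
    next
      case (smult f c) then show ?case using fa_ideal.smult by blast
    qed
  qed
qed

lemma main: "fa_ideal (fp_rels scA scB \<union> {hgen \<Delta>A \<Delta>B \<psi> a b | a b. True})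
       = fa_ideal (fp_rels scA scB \<union> {hgen \<Delta>A \<Delta>B \<psi> a b | a b. a \<in> XA \<and> b \<in> XB})"
  using main0 unfolding Iset_def .

end


theorem lemma2p1p1:
  fixes scA :: "'k::field \<Rightarrow> 'a::ring_1 \<Rightarrow> 'a"
    and scB :: "'k \<Rightarrow> 'b::ring_1 \<Rightarrow> 'b"
    and \<Delta>A :: "'a \<Rightarrow> ('a \<times> 'a) list" and \<epsilon>A :: "'a \<Rightarrow> 'k" and \<sigma>A :: "'a \<Rightarrow> 'a"
    and \<Delta>B :: "'b \<Rightarrow> ('b \<times> 'b) list" and \<epsilon>B :: "'b \<Rightarrow> 'k" and \<sigma>B :: "'b \<Rightarrow> 'b"
    and \<psi> :: "'a \<Rightarrow> 'b \<Rightarrow> 'k"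
    and XA :: "'a set" and XB :: "'b set"
  assumes "hopf_algebra scA \<Delta>A \<epsilon>A \<sigma>A"
    and "hopf_algebra scB \<Delta>B \<epsilon>B \<sigma>B"
    and "bij \<sigma>B"
    and "skew_hopf_pairing scA \<Delta>A \<epsilon>A \<sigma>A scB \<Delta>B \<epsilon>B \<sigma>B \<psi>"
    and "alg_gen scA XA = UNIV"
    and "alg_gen scB XB = UNIV"
    and "\<forall>x\<in>XA. \<exists>t. tensor_eq2 scA (\<Delta>A x) t \<and>
            (\<forall>(u,v)\<in>set t. u \<in> module.span scA XA \<and> v \<in> module.span scA XA)"
    and "\<forall>x\<in>XB. \<exists>t. tensor_eq2 scB (\<Delta>B x) t \<and>
            (\<forall>(u,v)\<in>set t. u \<in> module.span scB XB \<and> v \<in> module.span scB XB)"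
  shows "fa_ideal (fp_rels scA scB \<union> {hgen \<Delta>A \<Delta>B \<psi> a b | a b. True})
       = fa_ideal (fp_rels scA scB \<union> {hgen \<Delta>A \<Delta>B \<psi> a b | a b. a \<in> XA \<and> b \<in> XB})"
  proof -
  interpret core scA scB \<Delta>A \<epsilon>A \<sigma>A \<Delta>B \<epsilon>B \<sigma>B \<psi> XA XB
    using assms(1,2,4,5,6,7) by unfold_locales
  show ?thesis by (rule main)
qed

end
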